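(* Let $B>0$ and let $\mu$ be a finite Borel measure on $[-B,B]^d$ with uncountable support $\operatorname{supp}\mu$. For $x^*,v\in\mathbb{R}^d$ with $v\ne0$ define $H_\pm(x^*,v)=x^*+H_\pm(v)$, where $H_+(v)=\{x\in\mathbb{R}^d:\langle x,v\rangle>0\}$ and $H_-(v)=\{x\in\mathbb{R}^d:\langle x,v\rangle<0\}$. Then there exist $x^*\in[-B,B]^d$ and $v\in S^{d-1}$ such that the following holds: if $f:[-B,B]^d\to\mathbb{R}$ satisfies $f(x)=c$ for $x\in H_+(x^*,v)$ and $f(x)=c'$ for $x\in H_-(x^*,v)$ (restricted to $[-B,B]^d$) with constants $c\ne c'$, then there is no continuous $g:[-B,B]^d\to\mathbb{R}$ with $f=g$ $\mu$-almost everywhere.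
   Context: $S^{d-1}$ denotes the Euclidean unit sphere in $\mathbb{R}^d$ and $\langle\cdot,\cdot\rangle$ the Euclidean inner product. *)

theory Defs
  imports "HOL-Analysis.Analysis"
begin

definition cube :: "real \<Rightarrow> 'a::euclidean_space set" where
  "cube B = {x. \<forall>i\<in>Basis. \<bar>x \<bullet> i\<bar> \<le> B}"

definition msupp :: "'a::metric_space measure \<Rightarrow> 'a set" where
  "msupp M = {x. \<forall>e>0. emeasure M (ball x e) > 0}"

definition Hplus :: "'a::real_inner \<Rightarrow> 'a \<Rightarrow> 'a set" where
  "Hplus xs v = {x. (x - xs) \<bullet> v > 0}"
definition Hminus :: "'a::real_inner \<Rightarrow> 'a \<Rightarrow> 'a set" where
  "Hminus xs v = {x. (x - xs) \<bullet> v < 0}"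

end

theory Submission
  imports Defs
begin

lemma proj_uncountable:
  fixes S :: "'a::euclidean_space set"
  assumes "uncountable S"
  shows "\<exists>i\<in>Basis. uncountable ((\<lambda>x. x \<bullet> i) ` S)"
proof (rule ccontr)
  assume "\<not> ?thesis"
  hence c: "\<And>i. i \<in> Basis \<Longrightarrow> countable ((\<lambda>x. x \<bullet> i) ` S)" by blast
  let ?h = "\<lambda>x. restrict (\<lambda>i. x \<bullet> i) Basis"
  have "?h ` S \<subseteq> Pi\<^sub>E Basis (\<lambda>i. (\<lambda>x. x \<bullet> i) ` S)" by auto
  moreover have "countable (Pi\<^sub>E Basis (\<lambda>i. (\<lambda>x. x \<bullet> i) ` S))"
    by (rule countable_PiE) (auto intro: c)
  ultimately have "countable (?h ` S)" by (rule countable_subset)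
  moreover have "inj_on ?h S"
  proof (rule inj_onI)
    fix x y :: 'a assume "x \<in> S" "y \<in> S" and h: "?h x = ?h y"
    have "x \<bullet> i = y \<bullet> i" if "i \<in> Basis" for i using fun_cong[OF h, of i] that by simp
    thus "x = y" by (rule euclidean_eqI)
  qed
  ultimately have "countable S" by (rule countable_image_inj_on)
  with assms show False by simp
qed

lemma good_point:
  fixes S :: "'a::euclidean_space set" and v :: 'a
  assumes "uncountable ((\<lambda>x. x \<bullet> v) ` S)"
  shows "\<exists>x\<in>S. \<forall>e>0. (\<exists>z\<in>S. dist z x < e \<and> z \<bullet> v > x \<bullet> v)
                      \<and> (\<exists>z\<in>S. dist z x < e \<and> z \<bullet> v < x \<bullet> v)"
proof (rule ccontr)
  assume "\<not> ?thesis"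
  hence bad: "\<forall>x\<in>S. \<exists>e>0. (\<forall>z\<in>S. dist z x < e \<longrightarrow> z \<bullet> v \<le> x \<bullet> v)
                      \<or> (\<forall>z\<in>S. dist z x < e \<longrightarrow> z \<bullet> v \<ge> x \<bullet> v)"
    by (meson not_le)
  obtain D :: "'a set" where D: "countable D" "\<And>X. open X \<Longrightarrow> X \<noteq> {} \<Longrightarrow> \<exists>d\<in>D. d \<in> X"
    using countable_dense_exists by blast
  define Fm where "Fm = (\<lambda>(d,n::nat). Inf ((\<lambda>y. y \<bullet> v) ` (S \<inter> ball d (1 / Suc n))))"
  define Fp where "Fp = (\<lambda>(d,n::nat). Sup ((\<lambda>y. y \<bullet> v) ` (S \<inter> ball d (1 / Suc n))))"
  have "(\<lambda>x. x \<bullet> v) ` S \<subseteq> Fm ` (D \<times> UNIV) \<union> Fp ` (D \<times> UNIV)"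
  proof
    fix t assume "t \<in> (\<lambda>x. x \<bullet> v) ` S"
    then obtain x where x: "x \<in> S" "t = x \<bullet> v" by blast
    obtain e where e: "e > 0" and
      alt: "(\<forall>z\<in>S. dist z x < e \<longrightarrow> z \<bullet> v \<le> x \<bullet> v) \<or> (\<forall>z\<in>S. dist z x < e \<longrightarrow> z \<bullet> v \<ge> x \<bullet> v)"
      using bad x(1) by blast
    obtain n :: nat where n: "inverse (real (Suc n)) < e / 2"
      using reals_Archimedean[of "e/2"] e by auto
    have n': "2 / real (Suc n) < e" using n by (simp add: field_simps)
    obtain d where d: "d \<in> D" "d \<in> ball x (1 / Suc n)"
      using D(2)[of "ball x (1 / Suc n)"] by auto
    have xin: "x \<in> S \<inter> ball d (1 / Suc n)" using d x by (simp add: dist_commute)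
    have sub: "\<And>z. z \<in> ball d (1 / Suc n) \<Longrightarrow> dist z x < e"
    proof -
      fix z assume "z \<in> ball d (1 / Suc n)"
      hence "dist z d < 1 / Suc n" "dist d x < 1 / Suc n"
        using d by (auto simp: dist_commute)
      moreover have "dist z x \<le> dist z d + dist d x" by (rule dist_triangle)
      ultimately show "dist z x < e" using n' by simp
    qed
    from alt show "t \<in> Fm ` (D \<times> UNIV) \<union> Fp ` (D \<times> UNIV)"
    proof
      assume a: "\<forall>z\<in>S. dist z x < e \<longrightarrow> z \<bullet> v \<le> x \<bullet> v"
      have "Fp (d, n) = t" unfolding Fp_def x(2) case_prod_conv
      proof (rule cSup_eq_maximum)
        show "x \<bullet> v \<in> (\<lambda>y. y \<bullet> v) ` (S \<inter> ball d (1 / Suc n))" using xin by (rule imageI)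
        fix w assume "w \<in> (\<lambda>y. y \<bullet> v) ` (S \<inter> ball d (1 / Suc n))"
        then obtain y where "y \<in> S" "y \<in> ball d (1 / Suc n)" "w = y \<bullet> v" by blast
        thus "w \<le> x \<bullet> v" using a sub by blast
      qed
      thus ?thesis using d(1) by blast
    next
      assume a: "\<forall>z\<in>S. dist z x < e \<longrightarrow> z \<bullet> v \<ge> x \<bullet> v"
      have "Fm (d, n) = t" unfolding Fm_def x(2) case_prod_conv
      proof (rule cInf_eq_minimum)
        show "x \<bullet> v \<in> (\<lambda>y. y \<bullet> v) ` (S \<inter> ball d (1 / Suc n))" using xin by (rule imageI)
        fix w assume "w \<in> (\<lambda>y. y \<bullet> v) ` (S \<inter> ball d (1 / Suc n))"
        then obtain y where "y \<in> S" "y \<in> ball d (1 / Suc n)" "w = y \<bullet> v" by blast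
        thus "x \<bullet> v \<le> w" using a sub by blast
      qed
      thus ?thesis using d(1) by blast
    qed
  qed
  moreover have "countable (Fm ` (D \<times> UNIV) \<union> Fp ` (D \<times> UNIV))"
    using D(1) by (intro countable_Un countable_image countable_SIGMA) auto
  ultimately have "countable ((\<lambda>x. x \<bullet> v) ` S)" by (rule countable_subset)
  with assms show False by simp
qed

lemma limit_val:
  fixes g f :: "'a::metric_space \<Rightarrow> real"
  assumes "continuous_on K g" "x \<in> K"
    and "\<forall>e>0. \<exists>y\<in>K. dist y x < e \<and> y \<in> H \<and> f y = g y"
    and "\<forall>y\<in>K \<inter> H. f y = c"
  shows "g x = c"
proof (rule ccontr)
  assume ne: "g x \<noteq> c"
  obtain d where d: "d > 0" "\<forall>y\<in>K. dist y x < d \<longrightarrow> dist (g y) (g x) < \<bar>g x - c\<bar>"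
    using assms(1) assms(2) ne unfolding continuous_on_iff by (metis zero_less_abs_iff right_minus_eq)
  obtain y where y: "y \<in> K" "dist y x < d" "y \<in> H" "f y = g y" using assms(3) d(1) by blast
  have "g y = c" using y assms(4) by auto
  thus False using d(2) y by (auto simp: dist_real_def abs_minus_commute)
qed

theorem lemmaD1:
  fixes B :: real and \<mu> :: "'a::euclidean_space measure"
  assumes "B > 0"
    and "sets \<mu> = sets borel"
    and "finite_measure \<mu>"
    and "emeasure \<mu> (UNIV - cube B) = 0"
    and "uncountable (msupp \<mu>)"
  shows "\<exists>xs\<in>cube B. \<exists>v. norm v = 1 \<and>
    (\<forall>(f :: 'a \<Rightarrow> real) c c'. c \<noteq> c'
       \<and> (\<forall>x\<in>cube B \<inter> Hplus xs v. f x = c)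
       \<and> (\<forall>x\<in>cube B \<inter> Hminus xs v. f x = c')
       \<longrightarrow> \<not> (\<exists>g :: 'a \<Rightarrow> real. continuous_on (cube B) g
                 \<and> (AE x in \<mu>. x \<in> cube B \<longrightarrow> f x = g x)))"
proof -
  let ?S = "msupp \<mu>"
  have sp: "space \<mu> = UNIV" using assms(2) sets_eq_imp_space_eq by fastforce
  have ball_sets: "\<And>z r. ball z r \<in> sets \<mu>" using assms(2) by simp
  have cube_closed: "closed (cube B :: 'a set)"
  proof -
    have "cube B = (\<Inter>i\<in>Basis. {x::'a. \<bar>x \<bullet> i\<bar> \<le> B})" unfolding cube_def by auto
    moreover have "closed {x::'a. \<bar>x \<bullet> i\<bar> \<le> B}" for i
      by (intro closed_Collect_le continuous_intros)
    ultimately show ?thesis by auto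
  qed
  have cube_sets: "UNIV - cube B \<in> sets \<mu>" using assms(2) cube_closed by auto
  have AEcube: "AE x in \<mu>. x \<in> cube B"
    using AE_iff_measurable[OF cube_sets, of "\<lambda>x. x \<in> cube B"] assms(4) sp by auto
  have Ssub: "?S \<subseteq> cube B"
  proof
    fix x assume xS: "x \<in> ?S"
    show "x \<in> cube B"
    proof (rule ccontr)
      assume "x \<notin> cube B"
      then obtain e where e: "e > 0" "ball x e \<subseteq> UNIV - cube B"
        using cube_closed unfolding closed_def open_contains_ball by blast
      have "emeasure \<mu> (ball x e) \<le> emeasure \<mu> (UNIV - cube B)"
        by (rule emeasure_mono[OF e(2) cube_sets])
      hence "emeasure \<mu> (ball x e) = 0" using assms(4) by simp
      with xS e(1) show False unfolding msupp_def by auto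
    qed
  qed
  obtain v :: 'a where v: "v \<in> Basis" "uncountable ((\<lambda>x. x \<bullet> v) ` ?S)"
    using proj_uncountable[OF assms(5)] by blast
  obtain x where x: "x \<in> ?S" and good: "\<forall>e>0. (\<exists>z\<in>?S. dist z x < e \<and> z \<bullet> v > x \<bullet> v)
                      \<and> (\<exists>z\<in>?S. dist z x < e \<and> z \<bullet> v < x \<bullet> v)"
    using good_point[OF v(2)] by blast
  have nv: "norm v = 1" using v(1) by simp
  have xc: "x \<in> cube B" using x Ssub by auto
  show ?thesis
  proof (intro bexI[OF _ xc] exI[of _ v] conjI nv allI impI notI)
    fix f :: "'a \<Rightarrow> real" and c c'
    assume hyp: "c \<noteq> c' \<and> (\<forall>x\<in>cube B \<inter> Hplus x v. f x = c) \<and> (\<forall>x\<in>cube B \<inter> Hminus x v. f x = c')"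
    assume "\<exists>g. continuous_on (cube B) g \<and> (AE x in \<mu>. x \<in> cube B \<longrightarrow> f x = g x)"
    then obtain g where g: "continuous_on (cube B) g" "AE x in \<mu>. x \<in> cube B \<longrightarrow> f x = g x" by blast
    have AEg: "AE y in \<mu>. y \<in> cube B \<and> f y = g y" using g(2) AEcube by eventually_elim auto
    have pos: "\<exists>y\<in>ball z r. y \<in> cube B \<and> f y = g y" if "z \<in> ?S" "r > 0" for z r
    proof (rule ccontr)
      assume neg: "\<not> ?thesis"
      have "AE y in \<mu>. y \<notin> ball z r" using AEg by (rule eventually_mono) (use neg in auto)
      moreover have "{y \<in> space \<mu>. \<not> (y \<notin> ball z r)} = ball z r" using sp by auto
      hence "(AE y in \<mu>. y \<notin> ball z r) \<longleftrightarrow> emeasure \<mu> (ball z r) = 0"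
        by (rule AE_iff_measurable[OF ball_sets])
      ultimately have "emeasure \<mu> (ball z r) = 0" by blast
      moreover have "emeasure \<mu> (ball z r) > 0" using that unfolding msupp_def by blast
      ultimately show False by simp
    qed
    have cs: "\<bar>(y - z) \<bullet> v\<bar> \<le> dist y z" for y z
      using Cauchy_Schwarz_ineq2[of "y - z" v] nv by (simp add: dist_norm)
    have "g x = c"
    proof (rule limit_val[OF g(1) xc, of "Hplus x v" f])
      show "\<forall>y\<in>cube B \<inter> Hplus x v. f y = c" using hyp by blast
      show "\<forall>e>0. \<exists>y\<in>cube B. dist y x < e \<and> y \<in> Hplus x v \<and> f y = g y"
      proof (intro allI impI)
        fix e :: real assume e: "e > 0"
        then obtain z where z: "z \<in> ?S" "dist z x < e/2" "z \<bullet> v > x \<bullet> v" using good by (meson half_gt_zero)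
        define r where "r = min (e/2) (z \<bullet> v - x \<bullet> v)"
        have r: "r > 0" using e z by (simp add: r_def)
        obtain y where y: "y \<in> ball z r" "y \<in> cube B" "f y = g y" using pos[OF z(1) r] by blast
        have dyz: "dist y z < r" using y(1) by (simp add: dist_commute)
        have "dist y x \<le> dist y z + dist z x" by (rule dist_triangle)
        hence "dist y x < e" using dyz z(2) by (simp add: r_def)
        moreover have "(y - x) \<bullet> v > 0"
        proof -
          have "(y - x) \<bullet> v = (y - z) \<bullet> v + (z \<bullet> v - x \<bullet> v)" by (simp add: inner_diff_left)
          moreover have "(y - z) \<bullet> v \<ge> - dist y z" using cs[of y z] by linarith
          moreover have "dist y z < z \<bullet> v - x \<bullet> v" using dyz by (simp add: r_def)
          ultimately show ?thesis by linarith
        qed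
        ultimately show "\<exists>y\<in>cube B. dist y x < e \<and> y \<in> Hplus x v \<and> f y = g y"
          using y by (auto simp: Hplus_def)
      qed
    qed
    moreover have "g x = c'"
    proof (rule limit_val[OF g(1) xc, of "Hminus x v" f])
      show "\<forall>y\<in>cube B \<inter> Hminus x v. f y = c'" using hyp by blast
      show "\<forall>e>0. \<exists>y\<in>cube B. dist y x < e \<and> y \<in> Hminus x v \<and> f y = g y"
      proof (intro allI impI)
        fix e :: real assume e: "e > 0"
        then obtain z where z: "z \<in> ?S" "dist z x < e/2" "z \<bullet> v < x \<bullet> v" using good by (meson half_gt_zero)
        define r where "r = min (e/2) (x \<bullet> v - z \<bullet> v)"
        have r: "r > 0" using e z by (simp add: r_def)
        obtain y where y: "y \<in> ball z r" "y \<in> cube B" "f y = g y" using pos[OF z(1) r] by blast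
        have dyz: "dist y z < r" using y(1) by (simp add: dist_commute)
        have "dist y x \<le> dist y z + dist z x" by (rule dist_triangle)
        hence "dist y x < e" using dyz z(2) by (simp add: r_def)
        moreover have "(y - x) \<bullet> v < 0"
        proof -
          have "(y - x) \<bullet> v = (y - z) \<bullet> v + (z \<bullet> v - x \<bullet> v)" by (simp add: inner_diff_left)
          moreover have "(y - z) \<bullet> v \<le> dist y z" using cs[of y z] by linarith
          moreover have "dist y z < x \<bullet> v - z \<bullet> v" using dyz by (simp add: r_def)
          ultimately show ?thesis by linarith
        qed
        ultimately show "\<exists>y\<in>cube B. dist y x < e \<and> y \<in> Hminus x v \<and> f y = g y"
          using y by (auto simp: Hminus_def)
      qed
    qed
    ultimately show False using hyp by simp
  qed
qed

end
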